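(* Let $a_1,\dots,a_s$ be nonnegative integers. Then for arbitrary integers $k_1,\dots,k_s$ with $1\le k_i\le a_1+\cdots+a_s-1$ for all $i$, either $1\le k_i\le a_i-1$ for some $i$, or $1-a_j\le k_i-k_j\le a_i-1$ for some $i<j$. *)

theory Defs
  imports Main
begin

end

theory Submission
  imports Defs
begin

theorem mainTheorem6:
  fixes s :: nat and a k :: "nat \<Rightarrow> int"
  assumes "s \<ge> 1"
    and "\<forall>i\<in>{1..s}. a i \<ge> 0"
    and "\<forall>i\<in>{1..s}. 1 \<le> k i \<and> k i \<le> (\<Sum>j=1..s. a j) - 1"
  shows "(\<exists>i\<in>{1..s}. 1 \<le> k i \<and> k i \<le> a i - 1)
       \<or> (\<exists>i\<in>{1..s}. \<exists>j\<in>{1..s}. i < j \<and> 1 - a j \<le> k i - k j \<and> k i - k j \<le> a i - 1)"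
proof (rule ccontr)
  assume neg: "\<not> ?thesis"
  define N where "N = (\<Sum>j=1..s. a j)"
  define S where "S i = {k i - a i + 1 .. k i}" for i
  have ge: "\<forall>i\<in>{1..s}. k i \<ge> a i"
  proof
    fix i assume i: "i \<in> {1..s}"
    have "\<not> (1 \<le> k i \<and> k i \<le> a i - 1)" using neg i by blast
    moreover have "1 \<le> k i" using assms(3) i by blast
    ultimately show "k i \<ge> a i" by linarith
  qed
  have sub: "\<forall>i\<in>{1..s}. S i \<subseteq> {1..N-1}" using ge assms(3) unfolding S_def N_def by force
  have disj: "\<forall>i\<in>{1..s}. \<forall>j\<in>{1..s}. i \<noteq> j \<longrightarrow> S i \<inter> S j = {}"
  proof (intro ballI impI)
    fix i j assume ij: "i \<in> {1..s}" "j \<in> {1..s}" "i \<noteq> j"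
    show "S i \<inter> S j = {}"
    proof (cases "i < j")
      case True
      then have "\<not> (1 - a j \<le> k i - k j \<and> k i - k j \<le> a i - 1)" using neg ij by blast
      then show ?thesis unfolding S_def by auto
    next
      case False
      then have "j < i" using ij by simp
      then have "\<not> (1 - a i \<le> k j - k i \<and> k j - k i \<le> a j - 1)" using neg ij by blast
      then show ?thesis unfolding S_def by auto
    qed
  qed
  have "card (\<Union>i\<in>{1..s}. S i) = (\<Sum>i=1..s. card (S i))"
    proof (rule card_UN_disjoint)
    show "\<forall>i\<in>{1..s}. \<forall>j\<in>{1..s}. i \<noteq> j \<longrightarrow> S i \<inter> S j = {}" by (rule disj)
  qed (auto simp: S_def)
  also have "\<dots> = (\<Sum>i=1..s. nat (a i))"
    by (rule sum.cong) (auto simp: S_def)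
  finally have c1: "card (\<Union>i\<in>{1..s}. S i) = (\<Sum>i=1..s. nat (a i))" .
  have "card (\<Union>i\<in>{1..s}. S i) \<le> card {1..N-1}"
    by (rule card_mono) (use sub in auto)
  then have le: "(\<Sum>i=1..s. nat (a i)) \<le> nat (N - 1)" using c1 by simp
  have "int (\<Sum>i=1..s. nat (a i)) = N" unfolding N_def using assms(2) by simp
  moreover have "1 \<in> {1..s}" using assms(1) by simp
  then have "N \<ge> 2" using assms(3) unfolding N_def by fastforce
  ultimately show False using le by linarith
qed

end
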